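(* Let $1,2,3,4$ be four distinct vertices of $G$ such that $G[\{1,2,3\}]$ has edge set exactly $\{12,23\}$, $G[\{2,3,4\}]$ has edge set exactly $\{23,24,34\}$, and $w_{23}\ge w_{24}$ (nothing is assumed about whether $14$ is an edge). If $\Gamma_G$ is population monotonic, then $w_{23}\ge w_{12}+w_{34}$ and $w_{23}\ge w_{24}+w_{34}$.
   Context: $G=(V,E;w)$ is a finite simple graph with edge weights $w:E\to\mathbb{R}$, $w_e>0$ for all $e\in E$; $w_{ij}$ denotes the weight of edge $ij$. The matching game on $G$ is the cooperative game $\Gamma_G=(N,\gamma)$ with player set $N=V$ and, for $S\subseteq N$, $\gamma(S)$ equal to the maximum weight of a matching in the induced subgraph $G[S]$ (so $\gamma(\emptyset)=0$). A population monotonic allocation scheme (PMAS) is a family $(\boldsymbol{x}_S)_{\emptyset\neq S\subseteq N}$ with $\boldsymbol{x}_S=(x_{S,i})_{i\in S}\in\mathbb{R}^S$ such that (efficiency) $\sum_{i\in S}x_{S,i}=\gamma(S)$ for every nonempty $S\subseteq N$, and (monotonicity) $x_{S,i}\le x_{T,i}$ whenever $\emptyset\ne S\subseteq T\subseteq N$ and $i\in S$. $\Gamma_G$ is called population monotonic if it admits a PMAS. *)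

theory Defs
  imports Complex_Main "HOL-Library.Disjoint_Sets"
begin

definition simple_graph :: "'a set \<Rightarrow> 'a set set \<Rightarrow> bool" where
  "simple_graph V E \<longleftrightarrow> finite V \<and> (\<forall>e\<in>E. e \<subseteq> V \<and> card e = 2)"

definition matchings_in :: "'a set set \<Rightarrow> 'a set \<Rightarrow> 'a set set set" where
  "matchings_in E S = {M. M \<subseteq> E \<and> (\<forall>e\<in>M. e \<subseteq> S) \<and> disjoint M}"

definition gamma :: "'a set set \<Rightarrow> ('a set \<Rightarrow> real) \<Rightarrow> 'a set \<Rightarrow> real" where
  "gamma E w S = Max ((\<lambda>M. \<Sum>e\<in>M. w e) ` matchings_in E S)"

text \<open>Population monotonic allocation scheme: x S i is the payoff of player i
  in coalition S.\<close>
definition is_PMAS :: "'a set \<Rightarrow> 'a set set \<Rightarrow> ('a set \<Rightarrow> real) \<Rightarrow> ('a set \<Rightarrow> 'a \<Rightarrow> real) \<Rightarrow> bool" where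
  "is_PMAS V E w x \<longleftrightarrow>
     (\<forall>S. S \<subseteq> V \<and> S \<noteq> {} \<longrightarrow> (\<Sum>i\<in>S. x S i) = gamma E w S) \<and>
     (\<forall>S T i. S \<noteq> {} \<and> S \<subseteq> T \<and> T \<subseteq> V \<and> i \<in> S \<longrightarrow> x S i \<le> x T i)"

definition population_monotonic :: "'a set \<Rightarrow> 'a set set \<Rightarrow> ('a set \<Rightarrow> real) \<Rightarrow> bool" where
  "population_monotonic V E w \<longleftrightarrow> (\<exists>x. is_PMAS V E w x)"

end

theory Submission
  imports Defs
begin

lemma finite_matchings:
  assumes "finite S" shows "finite (matchings_in E S)"
proof -
  have "matchings_in E S \<subseteq> Pow (Pow S)" unfolding matchings_in_def by auto
  thus ?thesis using assms by (meson finite_Pow_iff finite_subset)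
qed

lemma gamma_le:
  assumes S: "finite S"
    and B: "\<And>e. e \<in> E \<Longrightarrow> e \<subseteq> S \<Longrightarrow> w e \<le> B" and B0: "0 \<le> B"
    and I: "\<And>e f. e \<in> E \<Longrightarrow> f \<in> E \<Longrightarrow> e \<subseteq> S \<Longrightarrow> f \<subseteq> S \<Longrightarrow> e \<noteq> f \<Longrightarrow> e \<inter> f \<noteq> {}"
  shows "gamma E w S \<le> B"
proof -
  have fin: "finite (matchings_in E S)" using finite_matchings[OF S] .
  have ne: "{} \<in> matchings_in E S" unfolding matchings_in_def by auto
  have "\<forall>M \<in> matchings_in E S. (\<Sum>e\<in>M. w e) \<le> B"
  proof
    fix M assume M: "M \<in> matchings_in E S"
    hence ME: "M \<subseteq> E" "\<forall>e\<in>M. e \<subseteq> S" "disjoint M" unfolding matchings_in_def by auto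
    show "(\<Sum>e\<in>M. w e) \<le> B"
    proof (cases "M = {}")
      case True thus ?thesis using B0 by simp
    next
      case False
      then obtain e where e: "e \<in> M" by auto
      have "M = {e}"
      proof (rule ccontr)
        assume "M \<noteq> {e}"
        then obtain f where f: "f \<in> M" "f \<noteq> e" using e by auto
        hence "disjnt f e" using ME(3) e unfolding pairwise_def by auto
        moreover have "f \<inter> e \<noteq> {}" using I[of f e] f e ME by auto
        ultimately show False by (simp add: disjnt_def)
      qed
      thus ?thesis using B e ME by auto
    qed
  qed
  thus ?thesis unfolding gamma_def using fin ne by (subst Max_le_iff) auto
qed

lemma gamma_ge:
  assumes S: "finite S" and e: "e \<in> E" "e \<subseteq> S"
  shows "w e \<le> gamma E w S"
proof -
  have "{e} \<in> matchings_in E S" unfolding matchings_in_def using e by auto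
  show ?thesis unfolding gamma_def
  proof (intro Max_ge)
    show "w e \<in> (\<lambda>M. \<Sum>e\<in>M. w e) ` matchings_in E S"
      by (rule image_eqI[where x="{e}"]) (use \<open>{e} \<in> matchings_in E S\<close> in auto)
  qed (use finite_matchings[OF S] in auto)
qed

lemma card3_inter:
  assumes "card S \<le> 3" "finite S" "e \<subseteq> S" "f \<subseteq> S" "card e = 2" "card f = 2" "e \<noteq> f"
  shows "e \<inter> f \<noteq> {}"
proof
  assume "e \<inter> f = {}"
  have fe: "finite e" "finite f" using assms finite_subset by auto
  have "card (e \<union> f) = 4" using card_Un_disjoint[OF fe \<open>e \<inter> f = {}\<close>] assms by simp
  moreover have "card (e \<union> f) \<le> card S" using assms by (intro card_mono) auto
  ultimately show False using assms by simp
qed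

theorem mainTheorem3:
  fixes V :: "'a set" and E :: "'a set set" and w :: "'a set \<Rightarrow> real"
    and v1 v2 v3 v4 :: 'a
  assumes G: "simple_graph V E"
    and wpos: "\<forall>e\<in>E. w e > 0"
    and verts: "v1 \<in> V" "v2 \<in> V" "v3 \<in> V" "v4 \<in> V"
    and dist: "distinct [v1, v2, v3, v4]"
    and e12: "{v1, v2} \<in> E" and e23: "{v2, v3} \<in> E" and n13: "{v1, v3} \<notin> E"
    and e24: "{v2, v4} \<in> E" and e34: "{v3, v4} \<in> E"
    and w_ge: "w {v2, v3} \<ge> w {v2, v4}"
    and PM: "population_monotonic V E w"
  shows "w {v2, v3} \<ge> w {v1, v2} + w {v3, v4} \<and> w {v2, v3} \<ge> w {v2, v4} + w {v3, v4}"
proof -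
  obtain x where x: "is_PMAS V E w x" using PM unfolding population_monotonic_def by auto
  have eff: "\<And>S. S \<subseteq> V \<Longrightarrow> S \<noteq> {} \<Longrightarrow> (\<Sum>i\<in>S. x S i) = gamma E w S"
    and mon: "\<And>S T i. S \<noteq> {} \<Longrightarrow> S \<subseteq> T \<Longrightarrow> T \<subseteq> V \<Longrightarrow> i \<in> S \<Longrightarrow> x S i \<le> x T i"
    using x unfolding is_PMAS_def by blast+
  have Ecard: "\<And>e. e \<in> E \<Longrightarrow> card e = 2" and EV: "\<And>e. e \<in> E \<Longrightarrow> e \<subseteq> V"
    using G unfolding simple_graph_def by auto
  define a where "a = w {v1, v2}"
  define b where "b = w {v2, v3}"
  define c where "c = w {v2, v4}"
  define d where "d = w {v3, v4}"
  have pos: "a > 0" "b > 0" "c > 0" "d > 0" using wpos e12 e23 e24 e34 a_def b_def c_def d_def by auto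
  have g1: "gamma E w {u} = 0" if "u \<in> V" for u
  proof -
    have "gamma E w {u} \<le> 0"
      by (rule gamma_le) (auto dest!: Ecard simp: subset_singleton_iff)
    moreover have "0 \<le> gamma E w {u}"
    proof -
      have "{} \<in> matchings_in E {u}" unfolding matchings_in_def by auto
      thus ?thesis unfolding gamma_def using finite_matchings[of "{u}" E]
        by (metis (no_types, lifting) Max_ge finite.intros finite_imageI image_eqI sum.empty)
    qed
    ultimately show ?thesis by simp
  qed
  have x1: "x {u} u = 0" if "u \<in> V" for u
    using eff[of "{u}"] g1[OF that] that by simp
  have nn: "x S u \<ge> 0" if "u \<in> S" "S \<subseteq> V" for S u
    using mon[of "{u}" S u] x1[of u] that by auto
  have g2: "gamma E w {u, v} = w {u, v}" if "{u,v} \<in> E" for u v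
  proof -
    have uv: "u \<noteq> v" using Ecard[OF that] by (cases "u = v") auto
    have sub: "\<And>e. e \<in> E \<Longrightarrow> e \<subseteq> {u,v} \<Longrightarrow> e = {u,v}"
    proof -
      fix e assume "e \<in> E" "e \<subseteq> {u,v}"
      moreover have "card e = 2" using Ecard \<open>e \<in> E\<close> by auto
      ultimately show "e = {u,v}" using uv
        by (intro card_seteq) auto
    qed
    have "gamma E w {u,v} \<le> w {u,v}"
      by (rule gamma_le) (use sub wpos that in auto)
    moreover have "w {u,v} \<le> gamma E w {u,v}" using gamma_ge[of "{u,v}" "{u,v}" E w] that by auto
    ultimately show ?thesis by simp
  qed
  have d12: "v1 \<noteq> v2" "v1 \<noteq> v3" "v1 \<noteq> v4" "v2 \<noteq> v3" "v2 \<noteq> v4" "v3 \<noteq> v4" using dist by auto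
  have p12: "x {v1,v2} v1 + x {v1,v2} v2 = a"
    using eff[of "{v1,v2}"] g2[OF e12] verts d12 a_def by simp
  have p23: "x {v2,v3} v2 + x {v2,v3} v3 = b"
    using eff[of "{v2,v3}"] g2[OF e23] verts d12 b_def by simp
  have p24: "x {v2,v4} v2 + x {v2,v4} v4 = c"
    using eff[of "{v2,v4}"] g2[OF e24] verts d12 c_def by simp
  have p34: "x {v3,v4} v3 + x {v3,v4} v4 = d"
    using eff[of "{v3,v4}"] g2[OF e34] verts d12 d_def by simp
  have ed: "\<And>e. e \<in> E \<Longrightarrow> e \<subseteq> {p,q,r} \<Longrightarrow> e = {p,q} \<or> e = {q,r} \<or> e = {p,r}" for p q r
  proof -
    fix e assume "e \<in> E" "e \<subseteq> {p,q,r}"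
    moreover obtain s t where "e = {s,t}" "s \<noteq> t" using Ecard[OF \<open>e \<in> E\<close>] by (auto simp: card_2_iff)
    ultimately show "e = {p,q} \<or> e = {q,r} \<or> e = {p,r}" by auto
  qed
  have t3: "\<And>e f. e \<in> E \<Longrightarrow> f \<in> E \<Longrightarrow> e \<subseteq> {p,q,r} \<Longrightarrow> f \<subseteq> {p,q,r} \<Longrightarrow> e \<noteq> f \<Longrightarrow> e \<inter> f \<noteq> {}" for p q r
  proof -
    fix e f assume h: "e \<in> E" "f \<in> E" "e \<subseteq> {p,q,r}" "f \<subseteq> {p,q,r}" "e \<noteq> f"
    have c3: "card {p,q,r} \<le> 3" by (cases "p=q"; cases "q=r"; cases "p=r") (auto simp: insert_commute)
    show "e \<inter> f \<noteq> {}"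
      by (rule card3_inter[OF c3 _ h(3) h(4) Ecard[OF h(1)] Ecard[OF h(2)] h(5)]) simp
  qed
  have g123: "gamma E w {v1,v2,v3} \<le> max a b"
  proof (rule gamma_le)
    fix e assume "e \<in> E" "e \<subseteq> {v1,v2,v3}"
    hence "e = {v1,v2} \<or> e = {v2,v3} \<or> e = {v1,v3}" by (rule ed)
    moreover have "e \<noteq> {v1,v3}" using n13 \<open>e \<in> E\<close> by blast
    ultimately have "e = {v1,v2} \<or> e = {v2,v3}" by blast
    thus "w e \<le> max a b" unfolding a_def b_def by (elim disjE) simp_all
  next
    show "finite {v1,v2,v3}" by simp
  next
    show "0 \<le> max a b" using pos by simp
  next
    fix e f show "e \<in> E \<Longrightarrow> f \<in> E \<Longrightarrow> e \<subseteq> {v1,v2,v3} \<Longrightarrow> f \<subseteq> {v1,v2,v3} \<Longrightarrow> e \<noteq> f \<Longrightarrow> e \<inter> f \<noteq> {}"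
      by (rule t3)
  qed
  have g234: "gamma E w {v2,v3,v4} \<le> max b d"
  proof (rule gamma_le)
    fix e assume "e \<in> E" "e \<subseteq> {v2,v3,v4}"
    hence "e = {v2,v3} \<or> e = {v3,v4} \<or> e = {v2,v4}" by (rule ed)
    thus "w e \<le> max b d" unfolding b_def d_def using w_ge by (elim disjE) simp_all
  next
    show "finite {v2,v3,v4}" by simp
  next
    show "0 \<le> max b d" using pos by simp
  next
    fix e f show "e \<in> E \<Longrightarrow> f \<in> E \<Longrightarrow> e \<subseteq> {v2,v3,v4} \<Longrightarrow> f \<subseteq> {v2,v3,v4} \<Longrightarrow> e \<noteq> f \<Longrightarrow> e \<inter> f \<noteq> {}"
      by (rule t3)
  qed
  have s123: "x {v1,v2,v3} v1 + x {v1,v2,v3} v2 + x {v1,v2,v3} v3 \<le> max a b"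
    using eff[of "{v1,v2,v3}"] g123 verts d12 by simp
  have s234: "x {v2,v3,v4} v2 + x {v2,v3,v4} v3 + x {v2,v3,v4} v4 \<le> max b d"
    using eff[of "{v2,v3,v4}"] g234 verts d12 by simp
  have V123: "{v1,v2,v3} \<subseteq> V" and V234: "{v2,v3,v4} \<subseteq> V" using verts by auto
  have m: "x {v1,v2} v1 \<le> x {v1,v2,v3} v1" "x {v1,v2} v2 \<le> x {v1,v2,v3} v2"
    "x {v2,v3} v2 \<le> x {v1,v2,v3} v2" "x {v2,v3} v3 \<le> x {v1,v2,v3} v3"
    "x {v2,v3} v2 \<le> x {v2,v3,v4} v2" "x {v2,v3} v3 \<le> x {v2,v3,v4} v3"
    "x {v2,v4} v2 \<le> x {v2,v3,v4} v2" "x {v2,v4} v4 \<le> x {v2,v3,v4} v4"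
    "x {v3,v4} v3 \<le> x {v2,v3,v4} v3" "x {v3,v4} v4 \<le> x {v2,v3,v4} v4"
    by (intro mon; use V123 V234 in auto)+
  have n: "x {v1,v2} v1 \<ge> 0" "x {v1,v2} v2 \<ge> 0" "x {v2,v3} v2 \<ge> 0" "x {v2,v3} v3 \<ge> 0"
    "x {v2,v4} v2 \<ge> 0" "x {v2,v4} v4 \<ge> 0" "x {v3,v4} v3 \<ge> 0" "x {v3,v4} v4 \<ge> 0"
    by (intro nn; use verts in auto)+
  have main: "b \<ge> a + d \<and> b \<ge> c + d"
  proof (cases "a \<le> b")
    case ab: True
    show ?thesis
    proof (cases "d \<le> b")
      case True
      hence "max a b = b" "max b d = b" using ab by auto
      thus ?thesis using p12 p23 p24 p34 s123 s234 m n by linarith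
    next
      case False
      hence "max a b = b" "max b d = d" using ab by auto
      thus ?thesis using p12 p23 p24 p34 s123 s234 m n pos by linarith
    qed
  next
    case ab: False
    show ?thesis
    proof (cases "d \<le> b")
      case True
      hence "max a b = a" "max b d = b" using ab by auto
      thus ?thesis using p12 p23 p24 p34 s123 s234 m n pos by linarith
    next
      case False
      hence "max a b = a" "max b d = d" using ab by auto
      thus ?thesis using p12 p23 p24 p34 s123 s234 m n pos by linarith
    qed
  qed
  thus ?thesis unfolding a_def b_def c_def d_def .
qed

end
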